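(* Let $\{a_l\}_{l\ge0}$ be a sequence of complex numbers and let $a_l^*=\sum_{k=0}^l\binom lk(-1)^ka_k$ for $l\ge0$. For $k\ge0$ set $$A_k(t)=\sum_{l=0}^k\binom kl(-1)^la_lt^{k-l},\qquad A_k^*(t)=\sum_{l=0}^k\binom kl(-1)^la_l^*t^{k-l}.$$ Let $n$ be a positive integer, let $r,s,t$ be complex numbers with $r+s+t=n-1$, and let $x,y,z$ be complex numbers with $x+y+z=1$. Then $$\sum_{k=0}^n(-1)^k\binom rkx^{n-k}\left(\binom {s}{n-k}A_k(y)-(-1)^n\binom t{n-k}A_k^*(z)\right)=0.$$
   Context: For complex $z$ and integer $k\ge0$, $\binom zk=z(z-1)\cdots(z-k+1)/k!$ (with $\binom z0=1$). *)

theory Defs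
  imports Complex_Main
begin

definition dual_seq :: "(nat \<Rightarrow> complex) \<Rightarrow> nat \<Rightarrow> complex" where
  "dual_seq a l = (\<Sum>k=0..l. of_nat (l choose k) * (-1)^k * a k)"

definition A_poly :: "(nat \<Rightarrow> complex) \<Rightarrow> nat \<Rightarrow> complex \<Rightarrow> complex" where
  "A_poly a k t = (\<Sum>l=0..k. of_nat (k choose l) * (-1)^l * a l * t^(k - l))"

end

theory Submission
  imports Defs "HOL-Computational_Algebra.Formal_Power_Series"
begin

lemma L_swap:
  fixes f :: "nat \<Rightarrow> nat \<Rightarrow> 'a::comm_monoid_add"
  shows "(\<Sum>k=0..n. \<Sum>j=0..k. f k j) = (\<Sum>j=0..n. \<Sum>m=0..n-j. f (j+m) j)"
proof -
  have "(\<Sum>(i,m)\<in>{(i,m). i+m \<le> n}. f (i+m) i) = (\<Sum>k\<le>n. \<Sum>i\<le>k. f (i + (k-i)) i)"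
    by (rule sum.triangle_reindex_eq)
  also have "\<dots> = (\<Sum>k=0..n. \<Sum>j=0..k. f k j)"
    by (simp add: atLeast0AtMost)
  finally have 1: "(\<Sum>(i,m)\<in>{(i,m). i+m \<le> n}. f (i+m) i) = (\<Sum>k=0..n. \<Sum>j=0..k. f k j)" .
  have "{(i,m). i+m \<le> n} = Sigma {0..n} (\<lambda>i. {0..n-i})" by auto
  then have "(\<Sum>(i,m)\<in>{(i,m). i+m \<le> n}. f (i+m) i) = (\<Sum>j=0..n. \<Sum>m=0..n-j. f (j+m) j)"
    by (simp add: sum.Sigma)
  with 1 show ?thesis by simp
qed

lemma key:
  fixes r s t x y :: complex and N :: nat
  assumes "r + s + t = of_nat N - 1"
  shows "(\<Sum>m=0..N. (-1)^m * (r gchoose m) * (s gchoose (N-m)) * x^(N-m) * y^m)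
       = (-1)^N * (\<Sum>m=0..N. (r gchoose m) * (t gchoose (N-m)) * x^(N-m) * (x+y)^m)"
proof -
  have "(\<Sum>m=0..N. (r gchoose m) * (t gchoose (N-m)) * x^(N-m) * (x+y)^m)
     = (\<Sum>m=0..N. \<Sum>i=0..m. (r gchoose m) * (t gchoose (N-m)) * of_nat (m choose i) * y^i * x^(N-i))"
  proof (rule sum.cong[OF refl])
    fix m assume m: "m \<in> {0..N}"
    have "(x+y)^m = (\<Sum>i=0..m. of_nat (m choose i) * y^i * x^(m-i))"
      by (subst add.commute, simp add: binomial_ring atLeast0AtMost)
    then have "(r gchoose m) * (t gchoose (N-m)) * x^(N-m) * (x+y)^m
       = (\<Sum>i=0..m. (r gchoose m) * (t gchoose (N-m)) * of_nat (m choose i) * y^i * (x^(m-i) * x^(N-m)))"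
      by (simp add: sum_distrib_left mult_ac)
    also have "\<dots> = (\<Sum>i=0..m. (r gchoose m) * (t gchoose (N-m)) * of_nat (m choose i) * y^i * x^(N-i))"
    proof (rule sum.cong[OF refl])
      fix i assume "i \<in> {0..m}"
      then have "m - i + (N - m) = N - i" using m by auto
      then show "(r gchoose m) * (t gchoose (N-m)) * of_nat (m choose i) * y^i * (x^(m-i) * x^(N-m))
          = (r gchoose m) * (t gchoose (N-m)) * of_nat (m choose i) * y^i * x^(N-i)"
        by (simp flip: power_add)
    qed
    finally show "(r gchoose m) * (t gchoose (N-m)) * x^(N-m) * (x+y)^m
       = (\<Sum>i=0..m. (r gchoose m) * (t gchoose (N-m)) * of_nat (m choose i) * y^i * x^(N-i))" .
  qed
  also have "\<dots> = (\<Sum>i=0..N. \<Sum>p=0..N-i. (r gchoose (i+p)) * (t gchoose (N-(i+p))) * of_nat ((i+p) choose i) * y^i * x^(N-i))"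
    by (rule L_swap)
  also have "\<dots> = (\<Sum>i=0..N. (r gchoose i) * y^i * x^(N-i) * (\<Sum>p=0..N-i. ((r - of_nat i) gchoose p) * (t gchoose ((N-i)-p))))"
  proof (rule sum.cong[OF refl])
    fix i assume "i \<in> {0..N}"
    show "(\<Sum>p=0..N-i. (r gchoose (i+p)) * (t gchoose (N-(i+p))) * of_nat ((i+p) choose i) * y^i * x^(N-i))
       = (r gchoose i) * y^i * x^(N-i) * (\<Sum>p=0..N-i. ((r - of_nat i) gchoose p) * (t gchoose ((N-i)-p)))"
      unfolding sum_distrib_left
    proof (rule sum.cong[OF refl])
      fix p
      have tr: "(r gchoose (i+p)) * (of_nat (i+p) gchoose i) = (r gchoose i) * ((r - of_nat i) gchoose p)"
        using gbinomial_trinomial_revision[of i "i+p" r] by simp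
      have "N - (i+p) = N - i - p" by simp
      then show "(r gchoose (i+p)) * (t gchoose (N-(i+p))) * of_nat ((i+p) choose i) * y^i * x^(N-i)
          = (r gchoose i) * y^i * x^(N-i) * (((r - of_nat i) gchoose p) * (t gchoose ((N-i)-p)))"
        using tr by (simp add: binomial_gbinomial mult_ac)
    qed
  qed
  also have "\<dots> = (\<Sum>i=0..N. (r gchoose i) * y^i * x^(N-i) * ((r - of_nat i + t) gchoose (N-i)))"
    by (rule sum.cong[OF refl], subst gbinomial_Vandermonde[of "r - of_nat _" t, symmetric], rule refl)
  also have "\<dots> = (\<Sum>i=0..N. (r gchoose i) * y^i * x^(N-i) * ((-1)^(N-i) * (s gchoose (N-i))))"
  proof (rule sum.cong[OF refl])
    fix i assume i: "i \<in> {0..N}"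
    have "of_nat (N-i) - (r - of_nat i + t) - 1 = s"
      using i assms by (simp add: of_nat_diff algebra_simps)
    then show "(r gchoose i) * y^i * x^(N-i) * ((r - of_nat i + t) gchoose (N-i))
        = (r gchoose i) * y^i * x^(N-i) * ((-1)^(N-i) * (s gchoose (N-i)))"
      by (simp add: gbinomial_negated_upper[of "r - of_nat i + t" "N-i"])
  qed
  finally have E: "(\<Sum>m=0..N. (r gchoose m) * (t gchoose (N-m)) * x^(N-m) * (x+y)^m)
     = (\<Sum>i=0..N. (r gchoose i) * y^i * x^(N-i) * ((-1)^(N-i) * (s gchoose (N-i))))" .
  show ?thesis
    unfolding E sum_distrib_left
  proof (rule sum.cong[OF refl])
    fix i assume i: "i \<in> {0..N}"
    have "(-1::complex)^N = (-1)^i * (-1)^(N-i)"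
      using i by (simp flip: power_add)
    then have "(-1::complex)^N * (-1)^(N-i) = (-1)^i * ((-1)^(N-i) * (-1)^(N-i))" by simp
    also have "\<dots> = (-1)^i" by (simp flip: power_add add: mult_2[symmetric])
    finally have "(-1::complex)^N * (-1)^(N-i) = (-1)^i" .
    then show "(-1)^i * (r gchoose i) * (s gchoose (N-i)) * x^(N-i) * y^i
       = (-1)^N * ((r gchoose i) * y^i * x^(N-i) * ((-1)^(N-i) * (s gchoose (N-i))))"
      by (simp add: mult_ac)
  qed
qed

lemma neg1_sq: "(-1::complex)^j * (-1)^j = 1"
  by (simp flip: power_add add: mult_2[symmetric])

lemma H1:
  fixes a :: "nat \<Rightarrow> complex"
  shows "A_poly (dual_seq a) k z = (-1)^k * A_poly a k (1 - z)"
proof -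
  have "A_poly (dual_seq a) k z = (\<Sum>l=0..k. \<Sum>j=0..l. of_nat (k choose l) * (-1)^l * (of_nat (l choose j) * (-1)^j * a j) * z^(k-l))"
    unfolding A_poly_def dual_seq_def by (simp add: sum_distrib_left sum_distrib_right)
  also have "\<dots> = (\<Sum>j=0..k. \<Sum>p=0..k-j. of_nat (k choose (j+p)) * (-1)^(j+p) * (of_nat ((j+p) choose j) * (-1)^j * a j) * z^(k-(j+p)))"
    by (rule L_swap)
  also have "\<dots> = (\<Sum>j=0..k. of_nat (k choose j) * a j * (\<Sum>p=0..k-j. of_nat ((k-j) choose p) * (-1)^p * z^((k-j)-p)))"
  proof (rule sum.cong[OF refl])
    fix j assume j: "j \<in> {0..k}"
    show "(\<Sum>p=0..k-j. of_nat (k choose (j+p)) * (-1)^(j+p) * (of_nat ((j+p) choose j) * (-1)^j * a j) * z^(k-(j+p)))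
      = of_nat (k choose j) * a j * (\<Sum>p=0..k-j. of_nat ((k-j) choose p) * (-1)^p * z^((k-j)-p))"
      unfolding sum_distrib_left
    proof (rule sum.cong[OF refl])
      fix p
      have tr: "(of_nat k gchoose (j+p)) * (of_nat (j+p) gchoose j) = ((of_nat k::complex) gchoose j) * ((of_nat k - of_nat j) gchoose p)"
        using gbinomial_trinomial_revision[of j "j+p" "of_nat k::complex"] by simp
      have "(of_nat k - of_nat j :: complex) = of_nat (k-j)" using j by (simp add: of_nat_diff)
      with tr have tr2: "of_nat (k choose (j+p)) * of_nat ((j+p) choose j) = (of_nat (k choose j) * of_nat ((k-j) choose p) :: complex)"
        by (simp add: binomial_gbinomial)
      have s: "(-1::complex)^(j+p) * (-1)^j = (-1)^p"
        using neg1_sq[of j] by (simp add: power_add mult_ac)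
      have e: "k - (j+p) = k - j - p" by simp
      show "of_nat (k choose (j+p)) * (-1)^(j+p) * (of_nat ((j+p) choose j) * (-1)^j * a j) * z^(k-(j+p))
        = of_nat (k choose j) * a j * (of_nat ((k-j) choose p) * (-1)^p * z^((k-j)-p))"
      proof -
        have gen: "A*E*(B*F*I)*H = C*I*(D*G*H)" if "A*B = C*D" "E*F = G" for A B C D E F G H I :: complex
        proof -
          have "A*E*(B*F*I)*H = (A*B)*(E*F)*I*H" by (simp add: mult_ac)
          also have "\<dots> = C*I*(D*G*H)" using that by (simp add: mult_ac)
          finally show ?thesis .
        qed
        show ?thesis unfolding e by (rule gen[OF tr2 s])
      qed
    qed
  qed
  also have "\<dots> = (\<Sum>j=0..k. of_nat (k choose j) * a j * (z - 1)^(k-j))"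
  proof (rule sum.cong[OF refl])
    fix j
    have "(z-1)^(k-j) = (-1 + z)^(k-j)" by simp
    also have "\<dots> = (\<Sum>p=0..k-j. of_nat ((k-j) choose p) * (-1)^p * z^((k-j)-p))"
      unfolding binomial_ring atLeast0AtMost ..
    finally show "of_nat (k choose j) * a j * (\<Sum>p=0..k-j. of_nat ((k-j) choose p) * (-1)^p * z^((k-j)-p))
      = of_nat (k choose j) * a j * (z - 1)^(k-j)" by simp
  qed
  also have "\<dots> = (-1)^k * A_poly a k (1 - z)"
    unfolding A_poly_def sum_distrib_left
  proof (rule sum.cong[OF refl])
    fix j assume j: "j \<in> {0..k}"
    have f1: "(z - 1)^(k-j) = (-1)^(k-j) * (1-z)^(k-j)"
      by (simp flip: power_mult_distrib)
    have f2: "(-1::complex)^k = (-1)^j * (-1)^(k-j)" using j by (simp flip: power_add)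
    show "of_nat (k choose j) * a j * (z - 1)^(k-j) = (-1)^k * (of_nat (k choose j) * (-1)^j * a j * (1-z)^(k-j))"
    proof -
      have gen: "C*A*Z = K*(C*J*A*W)" if "Z = S*W" "K = J*S" "J*J = 1" for C A Z K J W S :: complex
        using that by algebra
      from gen[OF f1 f2 neg1_sq[of j]] show ?thesis .
    qed
  qed
  finally show ?thesis .
qed

theorem lemma2p2:
  fixes a :: "nat \<Rightarrow> complex" and n :: nat and r s t x y z :: complex
  assumes "n > 0"
    and "r + s + t = of_nat n - 1"
    and "x + y + z = 1"
  shows "(\<Sum>k=0..n. (-1)^k * (r gchoose k) * x^(n-k) *
           ((s gchoose (n-k)) * A_poly a k y
            - (-1)^n * (t gchoose (n-k)) * A_poly (dual_seq a) k z)) = 0"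
proof -
  have hz: "1 - z = x + y" using assms(3) by (simp add: algebra_simps)
  define F where "F = (\<lambda>k j. (-1)^k * (r gchoose k) * x^(n-k) * (of_nat (k choose j) * (-1)^j * a j)
     * ((s gchoose (n-k)) * y^(k-j) - (-1)^n * (-1)^k * (t gchoose (n-k)) * (x+y)^(k-j)))"
  have "(\<Sum>k=0..n. (-1)^k * (r gchoose k) * x^(n-k) *
           ((s gchoose (n-k)) * A_poly a k y
            - (-1)^n * (t gchoose (n-k)) * A_poly (dual_seq a) k z))
      = (\<Sum>k=0..n. \<Sum>j=0..k. F k j)"
  proof (rule sum.cong[OF refl])
    fix k
    show "(-1)^k * (r gchoose k) * x^(n-k) *
           ((s gchoose (n-k)) * A_poly a k y
            - (-1)^n * (t gchoose (n-k)) * A_poly (dual_seq a) k z) = (\<Sum>j=0..k. F k j)"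
      unfolding H1 hz unfolding A_poly_def F_def
      by (simp add: sum_distrib_left sum_distrib_right right_diff_distrib sum_subtractf mult_ac)
  qed
  also have "\<dots> = (\<Sum>j=0..n. \<Sum>m=0..n-j. F (j+m) j)" by (rule L_swap)
  also have "\<dots> = 0"
  proof (rule sum.neutral, rule ballI)
    fix j assume j: "j \<in> {0..n}"
    define N where "N = n - j"
    define r' where "r' = r - of_nat j"
    have rst: "r' + s + t = of_nat N - 1"
      using j assms(2) unfolding N_def r'_def by (simp add: of_nat_diff algebra_simps)
    have "(\<Sum>m=0..n-j. F (j+m) j) = (\<Sum>m=0..N. a j * (r gchoose j) *
        ((-1)^m * (r' gchoose m) * (s gchoose (N-m)) * x^(N-m) * y^m
         - (-1)^N * ((r' gchoose m) * (t gchoose (N-m)) * x^(N-m) * (x+y)^m)))"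
      unfolding N_def[symmetric]
    proof (rule sum.cong[OF refl])
      fix m assume m: "m \<in> {0..N}"
      have e1: "n - (j+m) = N - m" unfolding N_def by simp
      have e2: "j + m - j = m" by simp
      have tr: "(r gchoose (j+m)) * (of_nat (j+m) gchoose j) = (r gchoose j) * (r' gchoose m)"
        using gbinomial_trinomial_revision[of j "j+m" r] unfolding r'_def by simp
      hence tr2: "(r gchoose (j+m)) * of_nat ((j+m) choose j) = (r gchoose j) * (r' gchoose m)"
        by (simp add: binomial_gbinomial)
      have s1: "(-1::complex)^(j+m) = (-1)^j * (-1)^m" by (simp add: power_add)
      have s2: "(-1::complex)^n = (-1)^N * (-1)^j" using j unfolding N_def by (simp flip: power_add)
      have gen: "EE*A*X*(B*FF*aa)*(S*Y - P*EE*T*W) = aa*C*(G*D*S*X*Y - Q*(D*T*X*W))"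
        if "A*B = C*D" "EE = FF*G" "P = Q*FF" "FF*FF = 1" "G*G = 1"
        for A B C D EE FF G P Q S T X Y W aa :: complex
        using that by algebra
      show "F (j+m) j = a j * (r gchoose j) *
        ((-1)^m * (r' gchoose m) * (s gchoose (N-m)) * x^(N-m) * y^m
         - (-1)^N * ((r' gchoose m) * (t gchoose (N-m)) * x^(N-m) * (x+y)^m))"
        unfolding F_def e1 e2 by (rule gen[OF tr2 s1 s2 neg1_sq neg1_sq])
    qed
    also have "\<dots> = a j * (r gchoose j) *
        ((\<Sum>m=0..N. (-1)^m * (r' gchoose m) * (s gchoose (N-m)) * x^(N-m) * y^m)
         - (-1)^N * (\<Sum>m=0..N. (r' gchoose m) * (t gchoose (N-m)) * x^(N-m) * (x+y)^m))"
      by (simp add: sum_distrib_left sum_subtractf right_diff_distrib)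
    also have "\<dots> = 0" using key[OF rst, of x y] by simp
    finally show "(\<Sum>m=0..n-j. F (j+m) j) = 0" .
  qed
  finally show ?thesis .
qed

end
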